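(* Let $U\subset\mathbb{R}^4$ be a contractible, oriented, relatively compact nonempty open set with coordinates $x^a$, $V\subset\mathbb{R}^{n_s}$ an oriented open set, $\mathcal{J}$ a taming map on $V$ and $(\mathcal{R},\mathcal{I})=\gamma^{-1}(\mathcal{J})$. Let $g$ be a Lorentzian metric on $U$, $\phi\colon U\to V$ smooth, and $\mathcal{V}\in\Omega^2(U,\mathbb{R}^{2n_v})$ with $\ast_g\mathcal{V}=-\mathcal{J}(\phi)\mathcal{V}$; write $\mathcal{V}=(F,G)^t$ with $F=(F^\Lambda)\in\Omega^2(U,\mathbb{R}^{n_v})$. Then for all indices $a,b$, $$2\,\mathcal{I}_{\Lambda\Sigma}(\phi)F^\Lambda_{ac}F^{\Sigma\,c}_{b}-\tfrac12 g_{ab}\,\mathcal{I}_{\Lambda\Sigma}(\phi)F^\Lambda_{cd}F^{\Sigma\,cd}=\omega\big(\mathcal{V}_{ac},\mathcal{J}(\phi)\mathcal{V}_b{}^{c}\big),$$ i.e. the gauge energy momentum tensor $\mathcal{T}(\mathcal{J})(g,\phi,\mathcal{V})$ equals $\omega(\mathcal{V}_{ac},\mathcal{J}\mathcal{V}_b{}^c)\,\mathrm{d}x^a\odot\mathrm{d}x^b$.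
   Context: Indices are raised with $g$ and repeated indices summed. The standard symplectic form $\omega$ on $\mathbb{R}^{2n_v}$ has matrix $\begin{pmatrix}0&-\mathrm{Id}\\ \mathrm{Id}&0\end{pmatrix}$ in the canonical basis. A local electromagnetic structure on $V$ is a pair $(\mathcal{R},\mathcal{I})$ of smooth maps $V\to\mathrm{Sym}(n_v,\mathbb{R})$ with $\mathcal{I}$ pointwise positive definite. A taming map is a smooth $\mathcal{J}\colon V\to\mathrm{Aut}(\mathbb{R}^{2n_v})$ whose values are complex structures $J$ with $\omega(J\cdot,J\cdot)=\omega$ and $\omega(\xi,J\xi)>0$ for $\xi\ne0$. The bijection $\gamma$ from local electromagnetic structures to taming maps sends $(\mathcal{R},\mathcal{I})$ to $\begin{pmatrix}-\mathcal{I}^{-1}\mathcal{R} & \mathcal{I}^{-1}\\ -\mathcal{I}-\mathcal{R}\mathcal{I}^{-1}\mathcal{R} & \mathcal{R}\mathcal{I}^{-1}\end{pmatrix}$. We write $\mathcal{J}(\phi)=\mathcal{J}\circ\phi$, $\mathcal{I}(\phi)=\mathcal{I}\circ\phi$, and $\ast_g$ is the Hodge star of $g$ and the orientation of $U$. *)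

theory Defs
  imports "HOL-Analysis.Analysis"
begin

fun Ck_on :: "nat \<Rightarrow> 'a::real_normed_vector set \<Rightarrow> ('a \<Rightarrow> 'b::real_normed_vector) \<Rightarrow> bool" where
  "Ck_on 0 S f = continuous_on S f"
| "Ck_on (Suc k) S f =
     (\<exists>f'. (\<forall>x\<in>S. (f has_derivative f' x) (at x)) \<and> (\<forall>v. Ck_on k S (\<lambda>x. f' x v)))"

definition smooth_on :: "'a::real_normed_vector set \<Rightarrow> ('a \<Rightarrow> 'b::real_normed_vector) \<Rightarrow> bool" where
  "smooth_on S f \<longleftrightarrow> (\<forall>k. Ck_on k S f)"

section \<open>Symplectic form on R^(2 n_v), indices Inl = first block, Inr = second block\<close>

definition omega_mat :: "real^('n::finite + 'n)^('n + 'n)" where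
  "omega_mat = (\<chi> i j. case (i, j) of
      (Inl p, Inr q) \<Rightarrow> (if p = q then -1 else 0)
    | (Inr p, Inl q) \<Rightarrow> (if p = q then 1 else 0)
    | _ \<Rightarrow> 0)"

definition omega :: "real^('n::finite + 'n) \<Rightarrow> real^('n + 'n) \<Rightarrow> real" where
  "omega \<xi> \<eta> = \<xi> \<bullet> (omega_mat *v \<eta>)"

definition sym_mat :: "real^'n^'n \<Rightarrow> bool" where
  "sym_mat A \<longleftrightarrow> transpose A = A"

definition pos_def_mat :: "real^'n^'n \<Rightarrow> bool" where
  "pos_def_mat A \<longleftrightarrow> (\<forall>v. v \<noteq> 0 \<longrightarrow> v \<bullet> (A *v v) > 0)"

definition local_em_structure ::
  "('s::finite) itself \<Rightarrow> (real^'s) set \<Rightarrow> (real^'s \<Rightarrow> real^'n::finite^'n) \<Rightarrow> (real^'s \<Rightarrow> real^'n^'n) \<Rightarrow> bool" where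
  "local_em_structure _ V R I \<longleftrightarrow>
     (\<forall>p q. smooth_on V (\<lambda>y. R y $ p $ q) \<and> smooth_on V (\<lambda>y. I y $ p $ q)) \<and>
     (\<forall>y\<in>V. sym_mat (R y) \<and> sym_mat (I y) \<and> pos_def_mat (I y))"

definition taming_map ::
  "(real^'s::finite) set \<Rightarrow> (real^'s \<Rightarrow> real^('n::finite + 'n)^('n + 'n)) \<Rightarrow> bool" where
  "taming_map V J \<longleftrightarrow>
     (\<forall>i j. smooth_on V (\<lambda>y. J y $ i $ j)) \<and>
     (\<forall>y\<in>V. J y ** J y = - mat 1 \<and>
        (\<forall>\<xi> \<eta>. omega (J y *v \<xi>) (J y *v \<eta>) = omega \<xi> \<eta>) \<and>
        (\<forall>\<xi>. \<xi> \<noteq> 0 \<longrightarrow> omega \<xi> (J y *v \<xi>) > 0))"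

definition gamma_mat :: "real^'n::finite^'n \<Rightarrow> real^'n^'n \<Rightarrow> real^('n + 'n)^('n + 'n)" where
  "gamma_mat R I = (let Ii = matrix_inv I in (\<chi> i j. case (i, j) of
      (Inl p, Inl q) \<Rightarrow> (- (Ii ** R)) $ p $ q
    | (Inl p, Inr q) \<Rightarrow> Ii $ p $ q
    | (Inr p, Inl q) \<Rightarrow> (- I - R ** Ii ** R) $ p $ q
    | (Inr p, Inr q) \<Rightarrow> (R ** Ii) $ p $ q))"

definition minkowski :: "real^4^4" where
  "minkowski = (\<chi> i j. if i = j then (if i = 0 then -1 else 1) else 0)"

definition lorentzian_metric :: "(real^4) set \<Rightarrow> (real^4 \<Rightarrow> real^4^4) \<Rightarrow> bool" where
  "lorentzian_metric U g \<longleftrightarrow>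
     (\<forall>a b. smooth_on U (\<lambda>x. g x $ a $ b)) \<and>
     (\<forall>x\<in>U. sym_mat (g x) \<and>
        (\<exists>P::real^4^4. invertible P \<and> transpose P ** g x ** P = minkowski))"

definition ord_sign :: "4 \<Rightarrow> 4 \<Rightarrow> real" where
  "ord_sign x y = (if x < y then 1 else if x = y then 0 else -1)"

text \<open>Levi-Civita symbol with epsilon_0123 = 1\<close>
definition levi :: "4 \<Rightarrow> 4 \<Rightarrow> 4 \<Rightarrow> 4 \<Rightarrow> real" where
  "levi a b c d = ord_sign a b * ord_sign a c * ord_sign a d * ord_sign b c * ord_sign b d * ord_sign c d"

text \<open>Hodge star of a (vector valued) 2-form given by antisymmetric components W a b,
  w.r.t. metric G and orientation sign \<sigma> (1: standard orientation dx0 dx1 dx2 dx3):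
  (*W)_ab = \<sigma>/2 sqrt|det G| eps_abcd G^ce G^df W_ef\<close>
definition hodge2 :: "real \<Rightarrow> real^4^4 \<Rightarrow> (4 \<Rightarrow> 4 \<Rightarrow> 'v::real_vector) \<Rightarrow> 4 \<Rightarrow> 4 \<Rightarrow> 'v" where
  "hodge2 \<sigma> G W a b = (\<sigma> * sqrt \<bar>det G\<bar> / 2) *\<^sub>R
     (\<Sum>c\<in>UNIV. \<Sum>d\<in>UNIV. \<Sum>e\<in>UNIV. \<Sum>f\<in>UNIV.
        (levi a b c d * matrix_inv G $ c $ e * matrix_inv G $ d $ f) *\<^sub>R W e f)"

definition two_form_on :: "(real^4) set \<Rightarrow> (real^4 \<Rightarrow> 4 \<Rightarrow> 4 \<Rightarrow> 'v::real_normed_vector) \<Rightarrow> bool" where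
  "two_form_on U W \<longleftrightarrow> (\<forall>a b. smooth_on U (\<lambda>x. W x a b)) \<and> (\<forall>x\<in>U. \<forall>a b. W x a b = - W x b a)"

end

theory Submission
  imports Defs
begin

lemma lt4: "(0::4) < 1" "(1::4) < 2" "(2::4) < 3" "(0::4) < 2" "(0::4) < 3" "(1::4) < 3"
  by (simp_all add: less_bit0_def bit0.Rep_numeral bit0.Rep_0 bit0.Rep_1)
lemma nlt4: "\<not> (1::4) < 0" "\<not> (2::4) < 1" "\<not> (3::4) < 2" "\<not> (2::4) < 0" "\<not> (3::4) < 0" "\<not> (3::4) < 1"
  using lt4 by (simp_all add: not_less order_less_imp_le)
lemma ne4: "(0::4) \<noteq> 1" "(0::4) \<noteq> 2" "(0::4) \<noteq> 3" "(1::4) \<noteq> 2" "(1::4) \<noteq> 3" "(2::4) \<noteq> 3"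
           "(1::4) \<noteq> 0" "(2::4) \<noteq> 0" "(3::4) \<noteq> 0" "(2::4) \<noteq> 1" "(3::4) \<noteq> 1" "(3::4) \<noteq> 2"
  using lt4 by (auto dest: less_imp_neq)
lemma ex4: fixes x :: 4 shows "x = 0 \<or> x = 1 \<or> x = 2 \<or> x = 3"
  using exhaust_4[of x] by auto
lemma sum4: "sum f (UNIV::4 set) = f 0 + f 1 + f 2 + f 3"
proof -
  have U: "(UNIV::4 set) = {0,1,2,3}" using ex4 by auto
  show ?thesis unfolding U using ne4 by (simp add: ac_simps)
qed

definition hodK :: "real \<Rightarrow> real^4^4 \<Rightarrow> real^4^4" where
  "hodK s K = (\<chi> a b. s/2 * (\<Sum>c\<in>UNIV. \<Sum>d\<in>UNIV. levi a b c d * K$c$d))"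

definition hodm :: "real \<Rightarrow> real^4^4 \<Rightarrow> real^4^4 \<Rightarrow> real^4^4" where
  "hodm s Gi W = hodK s (Gi ** W ** transpose Gi)"

definition ipm :: "real^4^4 \<Rightarrow> real^4^4 \<Rightarrow> real^4^4 \<Rightarrow> real" where
  "ipm Gi F H = trace (transpose F ** (Gi ** H ** transpose Gi))"

lemma levi_vals: "levi a b c d = (if a < b then 1 else if a = b then 0 else -1) * (if a < c then 1 else if a = c then 0 else -1)
 * (if a < d then 1 else if a = d then 0 else -1) * (if b < c then 1 else if b = c then 0 else -1)
 * (if b < d then 1 else if b = d then 0 else -1) * (if c < d then 1 else if c = d then 0 else -1)"
  by (simp add: levi_def ord_sign_def)

lemma antis: fixes F :: "real^4^4" assumes "transpose F = - F" shows "F$j$i = - F$i$j"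
proof -
  have "transpose F $ i $ j = (- F) $ i $ j" using assms by simp
  then show ?thesis by (simp add: transpose_def)
qed

lemma eta_ent: "minkowski $ i $ j = (if i = j then (if i = 0 then -1 else 1) else 0)"
  by (simp add: minkowski_def)

lemma mFm: "(minkowski ** F ** transpose minkowski) $ c $ d = (if c = 0 then -1 else 1) * (if d = 0 then -1 else 1) * F$c$d"
proof -
  have "(minkowski ** F ** transpose minkowski) $ c $ d = (\<Sum>k\<in>UNIV. (\<Sum>j\<in>UNIV. minkowski$c$j * F$j$k) * minkowski$d$k)"
    by (simp add: matrix_matrix_mult_def transpose_def)
  also have "... = (\<Sum>k\<in>UNIV. (if c = 0 then -1 else 1) * F$c$k * minkowski$d$k)"
    by (simp add: eta_ent if_distrib[of "\<lambda>x. x * _"] cong: if_cong)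
  also have "... = (if c = 0 then -1 else 1) * (if d = 0 then -1 else 1) * F$c$d"
    by (simp add: eta_ent if_distrib[of "\<lambda>x. _ * x"] cong: if_cong)
  finally show ?thesis .
qed


lemma forall4: "(\<forall>i::4. P i) \<longleftrightarrow> P 0 \<and> P 1 \<and> P 2 \<and> P 3"
  by (metis ex4)

lemma os_tab: "ord_sign 0 0 = 0" "ord_sign 1 1 = 0" "ord_sign 2 2 = 0" "ord_sign 3 3 = 0"
  "ord_sign 0 1 = 1" "ord_sign 0 2 = 1" "ord_sign 0 3 = 1" "ord_sign 1 2 = 1" "ord_sign 1 3 = 1" "ord_sign 2 3 = 1"
  "ord_sign 1 0 = -1" "ord_sign 2 0 = -1" "ord_sign 3 0 = -1" "ord_sign 2 1 = -1" "ord_sign 3 1 = -1" "ord_sign 3 2 = -1"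
  by (simp_all add: ord_sign_def lt4 nlt4)

definition hodE :: "real \<Rightarrow> real^4^4 \<Rightarrow> real^4^4" where
 "hodE t F = (\<chi> a b. t * (
     if a = 0 \<and> b = 1 then F$2$3 else if a = 1 \<and> b = 0 then - F$2$3 else
     if a = 0 \<and> b = 2 then - F$1$3 else if a = 2 \<and> b = 0 then F$1$3 else
     if a = 0 \<and> b = 3 then F$1$2 else if a = 3 \<and> b = 0 then - F$1$2 else
     if a = 1 \<and> b = 2 then - F$0$3 else if a = 2 \<and> b = 1 then F$0$3 else
     if a = 1 \<and> b = 3 then F$0$2 else if a = 3 \<and> b = 1 then - F$0$2 else
     if a = 2 \<and> b = 3 then - F$0$1 else if a = 3 \<and> b = 2 then F$0$1 else 0))"

lemma mink_hod:
  fixes F :: "real^4^4"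
  assumes "transpose F = - F"
  shows "hodm t minkowski F = hodE t F"
proof -
  have A: "F$j$i = - F$i$j" for i j using antis[OF assms] .
  have Z: "F$i$i = 0" for i using A[of i i] by simp
  have A': "F$1$0 = - F$0$1" "F$2$0 = - F$0$2" "F$3$0 = - F$0$3" "F$2$1 = - F$1$2" "F$3$1 = - F$1$3" "F$3$2 = - F$2$3"
    by (rule A)+
  have "\<forall>a b. hodm t minkowski F $ a $ b = hodE t F $ a $ b"
    unfolding forall4
    apply (intro conjI)
    apply (simp_all only: hodm_def hodK_def hodE_def vec_lambda_beta mFm sum4)
    apply (simp_all add: levi_def os_tab ne4 Z A')
    done
  then show ?thesis by (simp add: vec_eq_iff)
qed

lemma mmc: "(A ** B) $ i $ j = (\<Sum>k\<in>UNIV. A$i$k * B$k$j)"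
  by (simp add: matrix_matrix_mult_def)

lemma mink_key:
  fixes F H :: "real^4^4"
  assumes "transpose F = - F" "transpose H = - H" "t = 1 \<or> t = -1"
  shows "hodE t F ** minkowski ** transpose (hodE t H) = H ** minkowski ** transpose F - (1/2 * ipm minkowski F H) *\<^sub>R minkowski"
proof -
  have A: "F$j$i = - F$i$j" for i j using antis[OF assms(1)] .
  have Z: "F$i$i = 0" for i using A[of i i] by simp
  have A': "F$1$0 = - F$0$1" "F$2$0 = - F$0$2" "F$3$0 = - F$0$3" "F$2$1 = - F$1$2" "F$3$1 = - F$1$3" "F$3$2 = - F$2$3"
    by (rule A)+
  have B: "H$j$i = - H$i$j" for i j using antis[OF assms(2)] .
  have ZB: "H$i$i = 0" for i using B[of i i] by simp
  have B': "H$1$0 = - H$0$1" "H$2$0 = - H$0$2" "H$3$0 = - H$0$3" "H$2$1 = - H$1$2" "H$3$1 = - H$1$3" "H$3$2 = - H$2$3"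
    by (rule B)+
  have ip: "ipm minkowski F H = - 2 * F$0$1 * H$0$1 - 2 * F$0$2 * H$0$2 - 2 * F$0$3 * H$0$3
     + 2 * F$1$2 * H$1$2 + 2 * F$1$3 * H$1$3 + 2 * F$2$3 * H$2$3"
    unfolding ipm_def trace_def
    apply (simp only: mmc[where A="transpose F"] mFm sum4)
    by (simp add: transpose_def Z ZB A' B' ne4 algebra_simps)
  have "\<forall>a b. (hodE t F ** minkowski ** transpose (hodE t H)) $ a $ b = (H ** minkowski ** transpose F - (1/2 * ipm minkowski F H) *\<^sub>R minkowski) $ a $ b"
    unfolding forall4 ip
    using assms(3)
    apply (elim disjE)
    apply (simp_all only: matrix_matrix_mult_def transpose_def vec_lambda_beta sum4 hodE_def eta_ent
         vector_minus_component vector_scaleR_component)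
    apply (simp_all add: ne4 Z A' ZB B' eta_ent algebra_simps)
    done
  then show ?thesis by (simp add: vec_eq_iff)
qed
lemma ord_sign_anti: "ord_sign b a = - ord_sign a b"
  unfolding ord_sign_def by auto
lemma levi_swap12: "levi b a c d = - levi a b c d"
  unfolding levi_def by (simp add: ord_sign_anti[of b a])
lemma levi_swap23: "levi a c b d = - levi a b c d"
  unfolding levi_def by (simp add: ord_sign_anti[of c b])
lemma levi_swap34: "levi a b d c = - levi a b c d"
  unfolding levi_def by (simp add: ord_sign_anti[of d c])

lemma sort4:
  fixes f :: "4 \<Rightarrow> 4 \<Rightarrow> 4 \<Rightarrow> 4 \<Rightarrow> real"
  assumes s12: "\<And>a b c d. f b a c d = - f a b c d"
      and s23: "\<And>a b c d. f a c b d = - f a b c d"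
      and s34: "\<And>a b c d. f a b d c = - f a b c d"
  shows "f a b c d = levi a b c d * f 0 1 2 3"
proof -
  have z12: "f a a c d = 0" for a c d using s12[of a a c d] by simp
  have z23: "f a b b d = 0" for a b d using s23[of a b b d] by simp
  have z34: "f a b c c = 0" for a b c using s34[of a b c c] by simp
  have r12: "b < a \<Longrightarrow> f a b c d = - f b a c d" for a b c d using s12[of b a c d] by simp
  have r23: "c < b \<Longrightarrow> f a b c d = - f a c b d" for a b c d using s23[of a c b d] by simp
  have r34: "d < c \<Longrightarrow> f a b c d = - f a b d c" for a b c d using s34[of a b d c] by simp
  show ?thesis
    using ex4[of a] ex4[of b] ex4[of c] ex4[of d]
    apply (elim disjE)
    apply (simp_all only: z12 z23 z34)
    apply (simp_all add: lt4 nlt4 r12 r23 r34 z12 z23 z34 levi_def os_tab)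
    done
qed

definition psi4 :: "4 \<Rightarrow> 4 \<Rightarrow> 4 \<Rightarrow> 4 \<Rightarrow> 4 \<Rightarrow> 4" where
  "psi4 i j k l r = (if r = 0 then i else if r = 1 then j else if r = 2 then k else l)"

definition Dm :: "4 \<Rightarrow> 4 \<Rightarrow> 4 \<Rightarrow> 4 \<Rightarrow> real" where
  "Dm i j k l = det (\<chi> r. axis (psi4 i j k l r) (1::real) :: real^4^4)"

lemma det_perm_rows': 
  fixes A :: "real^4^4"
  assumes "p permutes UNIV" "\<And>r. B $ r = A $ p r"
  shows "det B = of_int (sign p) * det A"
proof -
  have "B = (\<chi> r. A $ p r)" using assms(2) by (simp add: vec_eq_iff)
  then show ?thesis using det_permute_rows[OF assms(1)] by simp
qed

lemma Dm_swap:
  "Dm j i k l = - Dm i j k l" "Dm i k j l = - Dm i j k l" "Dm i j l k = - Dm i j k l"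
proof -
  have P: "Transposition.transpose a b permutes (UNIV::4 set)" for a b by (rule permutes_swap_id) auto
  have S: "a \<noteq> b \<Longrightarrow> of_int (sign (Transposition.transpose a b)) = (-1::real)" for a b :: 4
    by (simp add: sign_swap_id)
  let ?A = "\<lambda>i j k l. (\<chi> r. axis (psi4 i j k l r) (1::real)) :: real^4^4"
  have "?A j i k l = (\<chi> r. ?A i j k l $ (Transposition.transpose 0 1 r))"
    by (simp add: vec_eq_iff forall4 psi4_def ne4)
  then show "Dm j i k l = - Dm i j k l"
    unfolding Dm_def using det_permute_rows[OF P[of 0 1], of "?A i j k l"] S[of 0 1] ne4 by simp
  have "?A i k j l = (\<chi> r. ?A i j k l $ (Transposition.transpose 1 2 r))"
    by (simp add: vec_eq_iff forall4 psi4_def ne4)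
  then show "Dm i k j l = - Dm i j k l"
    unfolding Dm_def using det_permute_rows[OF P[of 1 2], of "?A i j k l"] S[of 1 2] ne4 by simp
  have "?A i j l k = (\<chi> r. ?A i j k l $ (Transposition.transpose 2 3 r))"
    by (simp add: vec_eq_iff forall4 psi4_def ne4)
  then show "Dm i j l k = - Dm i j k l"
    unfolding Dm_def using det_permute_rows[OF P[of 2 3], of "?A i j k l"] S[of 2 3] ne4 by simp
qed

lemma Dm_levi: "Dm i j k l = levi i j k l"
proof -
  have "Dm i j k l = levi i j k l * Dm 0 1 2 3"
    by (rule sort4[of Dm]) (rule Dm_swap)+
  moreover have "Dm 0 1 2 3 = 1"
  proof -
    have "(\<chi> r. axis (psi4 0 1 2 3 r) (1::real)) = (mat 1 :: real^4^4)"
      by (simp add: vec_eq_iff forall4 psi4_def ne4 mat_def axis_def)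
    then show ?thesis unfolding Dm_def by simp
  qed
  ultimately show ?thesis by simp
qed

lemma prod4: "prod f (UNIV::4 set) = f 0 * f 1 * f 2 * f 3"
proof -
  have U: "(UNIV::4 set) = {0,1,2,3}" using ex4 by auto
  show ?thesis unfolding U using ne4 by (simp add: ac_simps)
qed

lemma psi4_eta: "psi4 (f 0) (f 1) (f 2) (f 3) = f"
  by (rule ext) (metis psi4_def ex4)

lemma sum_fun4: "(\<Sum>f\<in>(UNIV::(4\<Rightarrow>4) set). h (f 0) (f 1) (f 2) (f 3)) =
   (\<Sum>i\<in>UNIV. \<Sum>j\<in>UNIV. \<Sum>k\<in>UNIV. \<Sum>l\<in>UNIV. (h i j k l :: real))"
proof -
  have "(\<Sum>f\<in>(UNIV::(4\<Rightarrow>4) set). h (f 0) (f 1) (f 2) (f 3)) =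
        (\<Sum>(i,j,k,l)\<in>UNIV\<times>UNIV\<times>UNIV\<times>UNIV. h i j k l)"
    by (rule sum.reindex_bij_witness[where i="\<lambda>(i,j,k,l). psi4 i j k l" and j="\<lambda>f. (f 0, f 1, f 2, f 3)"])
       (auto simp: psi4_eta psi4_def ne4)
  also have "... = (\<Sum>i\<in>UNIV. \<Sum>j\<in>UNIV. \<Sum>k\<in>UNIV. \<Sum>l\<in>UNIV. h i j k l)"
    by (simp add: sum.cartesian_product split_def)
  finally show ?thesis .
qed

lemma det_expand: "det (N::real^4^4) =
  (\<Sum>i\<in>UNIV. \<Sum>j\<in>UNIV. \<Sum>k\<in>UNIV. \<Sum>l\<in>UNIV. levi i j k l * N$0$i * N$1$j * N$2$k * N$3$l)"
proof -
  have "N = (\<chi> r. \<Sum>i\<in>UNIV. N$r$i *s axis i (1::real))"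
    by (simp add: basis_expansion vec_eq_iff[of N])
  then have "det N = (\<Sum>f\<in>{f. \<forall>r. f r \<in> UNIV}. det (\<chi> r. N$r$(f r) *s axis (f r) (1::real) :: real^4^4))"
    using det_linear_rows_sum[of "UNIV::4 set" "\<lambda>r i. N$r$i *s axis i (1::real)"] by simp
  also have "... = (\<Sum>f\<in>(UNIV::(4\<Rightarrow>4) set). N$0$(f 0) * N$1$(f 1) * N$2$(f 2) * N$3$(f 3) * Dm (f 0) (f 1) (f 2) (f 3))"
  proof (rule sum.cong)
    fix f :: "4 \<Rightarrow> 4"
    show "det (\<chi> r. N$r$(f r) *s axis (f r) (1::real) :: real^4^4) = N$0$(f 0) * N$1$(f 1) * N$2$(f 2) * N$3$(f 3) * Dm (f 0) (f 1) (f 2) (f 3)"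
      unfolding det_rows_mul prod4 Dm_def psi4_eta by simp
  qed simp
  also have "... = (\<Sum>i\<in>UNIV. \<Sum>j\<in>UNIV. \<Sum>k\<in>UNIV. \<Sum>l\<in>UNIV. levi i j k l * N$0$i * N$1$j * N$2$k * N$3$l)"
    by (subst sum_fun4[where h="\<lambda>i j k l. N$0$i * N$1$j * N$2$k * N$3$l * Dm i j k l"]) (simp add: Dm_levi ac_simps)
  finally show ?thesis .
qed

definition Tm :: "real^4^4 \<Rightarrow> 4 \<Rightarrow> 4 \<Rightarrow> 4 \<Rightarrow> 4 \<Rightarrow> real" where
  "Tm M a b c d = (\<Sum>i\<in>UNIV. \<Sum>j\<in>UNIV. \<Sum>k\<in>UNIV. \<Sum>l\<in>UNIV. levi i j k l * M$i$a * M$j$b * M$k$c * M$l$d)"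

lemma Tm_swap:
  "Tm M b a c d = - Tm M a b c d" "Tm M a c b d = - Tm M a b c d" "Tm M a b d c = - Tm M a b c d"
proof -
  show "Tm M b a c d = - Tm M a b c d"
    unfolding Tm_def sum_negf[symmetric]
    apply (rule trans[OF sum.swap])
    apply (intro sum.cong refl)
    apply (subst levi_swap12)
    apply (simp add: algebra_simps)
    done
  show "Tm M a c b d = - Tm M a b c d"
    unfolding Tm_def sum_negf[symmetric]
    apply (rule sum.cong[OF refl])
    apply (rule trans[OF sum.swap])
    apply (intro sum.cong refl)
    apply (subst levi_swap23)
    apply (simp add: algebra_simps)
    done
  show "Tm M a b d c = - Tm M a b c d"
    unfolding Tm_def sum_negf[symmetric]
    apply (rule sum.cong[OF refl])
    apply (rule sum.cong[OF refl])
    apply (rule trans[OF sum.swap])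
    apply (intro sum.cong refl)
    apply (subst levi_swap34)
    apply (simp add: algebra_simps)
    done
qed

lemma eps_det: "(\<Sum>i\<in>UNIV. \<Sum>j\<in>UNIV. \<Sum>k\<in>UNIV. \<Sum>l\<in>UNIV. levi i j k l * M$i$a * M$j$b * M$k$c * M$l$d) = det M * levi a b c d"
proof -
  have "Tm M a b c d = levi a b c d * Tm M 0 1 2 3"
    by (rule sort4[of "Tm M"]) (rule Tm_swap)+
  moreover have "Tm M 0 1 2 3 = det M"
    using det_expand[of "transpose M"] unfolding det_transpose Tm_def by (simp add: transpose_def)
  ultimately show ?thesis unfolding Tm_def by simp
qed

lemma swap3: "(\<Sum>m\<in>A. \<Sum>n\<in>B. \<Sum>i\<in>C. f m n i) = (\<Sum>i\<in>C. \<Sum>m\<in>A. \<Sum>n\<in>B. (f m n i :: real))"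
proof -
  have "(\<Sum>m\<in>A. \<Sum>n\<in>B. \<Sum>i\<in>C. f m n i) = (\<Sum>m\<in>A. \<Sum>i\<in>C. \<Sum>n\<in>B. f m n i)"
    by (rule sum.cong[OF refl], rule sum.swap)
  also have "... = (\<Sum>i\<in>C. \<Sum>m\<in>A. \<Sum>n\<in>B. f m n i)" by (rule sum.swap)
  finally show ?thesis .
qed

lemma move2: "(\<Sum>m\<in>A. \<Sum>n\<in>B. \<Sum>i\<in>C. \<Sum>j\<in>D. \<Sum>c\<in>E. \<Sum>d\<in>G. f m n i j c d)
   = (\<Sum>i\<in>C. \<Sum>j\<in>D. \<Sum>c\<in>E. \<Sum>d\<in>G. \<Sum>m\<in>A. \<Sum>n\<in>B. (f m n i j c d :: real))"
proof -
  have "(\<Sum>m\<in>A. \<Sum>n\<in>B. \<Sum>i\<in>C. \<Sum>j\<in>D. \<Sum>c\<in>E. \<Sum>d\<in>G. f m n i j c d)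
     = (\<Sum>i\<in>C. \<Sum>m\<in>A. \<Sum>n\<in>B. \<Sum>j\<in>D. \<Sum>c\<in>E. \<Sum>d\<in>G. f m n i j c d)"
    by (rule swap3)
  also have "... = (\<Sum>i\<in>C. \<Sum>j\<in>D. \<Sum>m\<in>A. \<Sum>n\<in>B. \<Sum>c\<in>E. \<Sum>d\<in>G. f m n i j c d)"
    by (rule sum.cong[OF refl], rule swap3)
  also have "... = (\<Sum>i\<in>C. \<Sum>j\<in>D. \<Sum>c\<in>E. \<Sum>m\<in>A. \<Sum>n\<in>B. \<Sum>d\<in>G. f m n i j c d)"
    by (rule sum.cong[OF refl], rule sum.cong[OF refl], rule swap3)
  also have "... = (\<Sum>i\<in>C. \<Sum>j\<in>D. \<Sum>c\<in>E. \<Sum>d\<in>G. \<Sum>m\<in>A. \<Sum>n\<in>B. f m n i j c d)"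
    by (rule sum.cong[OF refl], rule sum.cong[OF refl], rule sum.cong[OF refl], rule swap3)
  finally show ?thesis .
qed

lemma hod_transform:
  fixes P N :: "real^4^4"
  shows "transpose P ** hodK s (P ** N ** transpose P) ** P = hodK (s * det P) N"
proof -
  let ?t = "\<lambda>a b i j c d m n. levi i j c d * P$i$a * P$j$b * P$c$m * P$d$n * N$m$n"
  have L1: "(transpose P ** hodK s (P ** N ** transpose P) ** P) $ a $ b = s/2 *
     (\<Sum>j\<in>UNIV. \<Sum>i\<in>UNIV. \<Sum>c\<in>UNIV. \<Sum>d\<in>UNIV. \<Sum>n\<in>UNIV. \<Sum>m\<in>UNIV. ?t a b i j c d m n)" for a b
    by (simp add: mmc hodK_def transpose_def sum_distrib_left sum_distrib_right algebra_simps)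
  have L2: "hodK (s * det P) N $ a $ b = s/2 *
     (\<Sum>m\<in>UNIV. \<Sum>n\<in>UNIV. \<Sum>i\<in>UNIV. \<Sum>j\<in>UNIV. \<Sum>c\<in>UNIV. \<Sum>d\<in>UNIV. ?t a b i j c d m n)" for a b
  proof -
    have e: "det P * levi a b m n = (\<Sum>i\<in>UNIV. \<Sum>j\<in>UNIV. \<Sum>c\<in>UNIV. \<Sum>d\<in>UNIV. levi i j c d * P$i$a * P$j$b * P$c$m * P$d$n)" for m n
      using eps_det[of P a b m n] by simp
    have "hodK (s * det P) N $ a $ b = s/2 * (\<Sum>m\<in>UNIV. \<Sum>n\<in>UNIV. (det P * levi a b m n) * N$m$n)"
      by (simp add: hodK_def sum_distrib_left algebra_simps)
    also have "... = s/2 * (\<Sum>m\<in>UNIV. \<Sum>n\<in>UNIV. \<Sum>i\<in>UNIV. \<Sum>j\<in>UNIV. \<Sum>c\<in>UNIV. \<Sum>d\<in>UNIV. ?t a b i j c d m n)"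
      unfolding e by (simp add: sum_distrib_right)
    finally show ?thesis .
  qed
  have L3: "(\<Sum>m\<in>UNIV. \<Sum>n\<in>UNIV. \<Sum>i\<in>UNIV. \<Sum>j\<in>UNIV. \<Sum>c\<in>UNIV. \<Sum>d\<in>UNIV. ?t a b i j c d m n)
     = (\<Sum>j\<in>UNIV. \<Sum>i\<in>UNIV. \<Sum>c\<in>UNIV. \<Sum>d\<in>UNIV. \<Sum>n\<in>UNIV. \<Sum>m\<in>UNIV. ?t a b i j c d m n)" for a b
    apply (subst move2)
    apply (rule trans[OF sum.swap])
    apply (rule sum.cong[OF refl], rule sum.cong[OF refl], rule sum.cong[OF refl], rule sum.cong[OF refl])
    apply (rule sum.swap)
    done
  show ?thesis unfolding vec_eq_iff by (intro allI) (simp only: L1 L2 L3)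
qed

lemma cancel_r: "A ** B = mat 1 \<Longrightarrow> X ** A ** B = X"
  by (metis matrix_mul_assoc matrix_mul_rid)

lemma mm_diff_l: "((A::real^'n^'m) - B) ** (C::real^'k^'n) = A ** C - B ** C"
  by (simp add: matrix_matrix_mult_def vec_eq_iff sum_subtractf algebra_simps)
lemma mm_scaleR_r: "(A::real^'n^'m) ** (c *\<^sub>R (B::real^'k^'n)) = c *\<^sub>R (A ** B)"
  by (simp add: matrix_matrix_mult_def vec_eq_iff sum_distrib_left algebra_simps)
lemma mm_scaleR_l: "(c *\<^sub>R (A::real^'n^'m)) ** (B::real^'k^'n) = c *\<^sub>R (A ** B)"
  by (simp add: matrix_matrix_mult_def vec_eq_iff sum_distrib_left algebra_simps)
lemma mm_diff_r: "(C::real^'n^'m) ** ((A::real^'k^'n) - B) = C ** A - C ** B"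
  by (simp add: matrix_matrix_mult_def vec_eq_iff sum_subtractf algebra_simps)

lemma mm_neg_l: "(- (A::real^'n^'m)) ** (B::real^'k^'n) = - (A ** B)"
  by (simp add: matrix_matrix_mult_def vec_eq_iff sum_negf)
lemma mm_neg_r: "(A::real^'n^'m) ** (- (B::real^'k^'n)) = - (A ** B)"
  by (simp add: matrix_matrix_mult_def vec_eq_iff sum_negf)

lemma eta_sq: "minkowski ** minkowski = mat 1"
  by (simp add: vec_eq_iff mmc eta_ent forall4 sum4 ne4 mat_def)
lemma eta_t: "transpose minkowski = minkowski"
  by (simp add: vec_eq_iff transpose_def eta_ent)
lemma det_eta: "det minkowski = -1"
  by (subst det_diagonal) (simp_all add: eta_ent prod4 ne4)

lemma inv_unique: "(A::real^'n^'n) ** B = mat 1 \<Longrightarrow> B ** A = mat 1 \<Longrightarrow> matrix_inv A = B"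
proof -
  assume 1: "A ** B = mat 1" and 2: "B ** A = mat 1"
  then have "\<exists>A'. A ** A' = mat 1 \<and> A' ** A = mat 1" by blast
  then have 3: "A ** matrix_inv A = mat 1 \<and> matrix_inv A ** A = mat 1"
    unfolding matrix_inv_def by (rule someI_ex)
  have "matrix_inv A = matrix_inv A ** (A ** B)" using 1 by simp
  also have "... = B" using 3 by (simp add: matrix_mul_assoc)
  finally show ?thesis .
qed

lemma key:
  fixes Gm P F H :: "real^4^4"
  assumes inv: "invertible P" and PG: "transpose P ** Gm ** P = minkowski"
    and sig: "\<sigma> = 1 \<or> \<sigma> = -1" and aF: "transpose F = - F" and aH: "transpose H = - H"
  shows "hodm (\<sigma> * sqrt \<bar>det Gm\<bar>) (matrix_inv Gm) F ** matrix_inv Gm ** transpose (hodm (\<sigma> * sqrt \<bar>det Gm\<bar>) (matrix_inv Gm) H)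
     = H ** matrix_inv Gm ** transpose F - (1/2 * ipm (matrix_inv Gm) F H) *\<^sub>R Gm"
proof -
  obtain Q where PQ: "P ** Q = mat 1" and QP: "Q ** P = mat 1" using inv unfolding invertible_def by blast
  have tPQ: "transpose Q ** transpose P = mat 1" using PQ by (metis matrix_transpose_mul transpose_mat)
  have tQP: "transpose P ** transpose Q = mat 1" using QP by (metis matrix_transpose_mul transpose_mat)
  have Gm: "Gm = transpose Q ** minkowski ** Q"
  proof -
    have "transpose Q ** minkowski ** Q = transpose Q ** (transpose P ** Gm ** P) ** Q" using PG by simp
    also have "... = (transpose Q ** transpose P) ** Gm ** (P ** Q)" by (simp add: matrix_mul_assoc)
    also have "... = Gm" by (simp only: tPQ PQ matrix_mul_lid matrix_mul_rid)
    finally show ?thesis by simp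
  qed
  define Gi where "Gi = P ** minkowski ** transpose P"
  have GiE: "matrix_inv Gm = Gi"
  proof (rule inv_unique)
    show "Gm ** Gi = mat 1" unfolding Gm Gi_def
      by (simp add: matrix_mul_assoc cancel_r[OF QP] cancel_r[OF eta_sq] cancel_r[OF tPQ] tPQ)
    show "Gi ** Gm = mat 1" unfolding Gm Gi_def
      by (simp add: matrix_mul_assoc cancel_r[OF tQP] cancel_r[OF eta_sq] cancel_r[OF PQ] PQ)
  qed
  have dG: "det P * det Gm * det P = -1"
    using arg_cong[OF PG, of det] by (simp add: det_mul det_eta)
  define \<tau> where "\<tau> = \<sigma> * sqrt \<bar>det Gm\<bar> * det P"
  have "\<tau> * \<tau> = 1"
  proof -
    have dG2: "det Gm * (det P * det P) = -1" using dG by (simp add: algebra_simps)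
    have "det Gm < 0"
    proof (rule ccontr)
      assume "\<not> det Gm < 0"
      then have "det Gm * (det P * det P) \<ge> 0" by simp
      then show False using dG2 by simp
    qed
    then have "\<bar>det Gm\<bar> = - det Gm" by simp
    moreover have "\<sigma> * \<sigma> = 1" using sig by auto
    ultimately have "\<tau> * \<tau> = (\<sigma> * \<sigma>) * (sqrt \<bar>det Gm\<bar> * sqrt \<bar>det Gm\<bar>) * (det P * det P)"
      unfolding \<tau>_def by (simp add: algebra_simps)
    also have "... = - det Gm * (det P * det P)" using \<open>\<sigma> * \<sigma> = 1\<close> \<open>\<bar>det Gm\<bar> = - det Gm\<close> by simp
    also have "... = 1" using dG by (simp add: algebra_simps)
    finally show ?thesis .
  qed
  then have tau: "\<tau> = 1 \<or> \<tau> = -1"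
    by (metis mult_cancel_left1 mult_minus1_right square_eq_iff)
  define s where "s = \<sigma> * sqrt \<bar>det Gm\<bar>"
  define F' where "F' = transpose P ** F ** P"
  define H' where "H' = transpose P ** H ** P"
  have aF': "transpose F' = - F'" unfolding F'_def
    by (simp add: matrix_transpose_mul aF mm_neg_l mm_neg_r matrix_mul_assoc)
  have aH': "transpose H' = - H'" unfolding H'_def
    by (simp add: matrix_transpose_mul aH mm_neg_l mm_neg_r matrix_mul_assoc)
  have K: "Gi ** W ** transpose Gi = P ** (minkowski ** (transpose P ** W ** P) ** transpose minkowski) ** transpose P" for W
    unfolding Gi_def by (simp add: matrix_transpose_mul matrix_mul_assoc eta_t)
  have hT: "transpose P ** hodm s Gi W ** P = hodm \<tau> minkowski (transpose P ** W ** P)" for W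
    unfolding hodm_def K hod_transform \<tau>_def s_def ..
  have ip: "ipm Gi F H = ipm minkowski F' H'"
  proof -
    let ?M = "minkowski ** H' ** transpose minkowski"
    have "ipm Gi F H = trace ((transpose F ** P ** ?M) ** transpose P)"
      unfolding ipm_def K H'_def by (simp add: matrix_mul_assoc)
    also have "... = trace (transpose P ** (transpose F ** P ** ?M))" by (rule trace_mul_sym)
    also have "... = ipm minkowski F' H'"
      unfolding ipm_def F'_def by (simp add: matrix_transpose_mul matrix_mul_assoc)
    finally show ?thesis .
  qed
  let ?hF = "hodm s Gi F" and ?hH = "hodm s Gi H"
  have "transpose P ** (?hF ** Gi ** transpose ?hH) ** P
      = (transpose P ** ?hF ** P) ** minkowski ** transpose (transpose P ** ?hH ** P)"
    unfolding Gi_def by (simp add: matrix_transpose_mul matrix_mul_assoc)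
  also have "... = hodE \<tau> F' ** minkowski ** transpose (hodE \<tau> H')"
    by (simp only: hT[of F, folded F'_def] hT[of H, folded H'_def] mink_hod[OF aF'] mink_hod[OF aH'])
  also have "... = H' ** minkowski ** transpose F' - (1/2 * ipm minkowski F' H') *\<^sub>R minkowski"
    by (rule mink_key[OF aF' aH' tau])
  also have "... = transpose P ** (H ** Gi ** transpose F - (1/2 * ipm Gi F H) *\<^sub>R Gm) ** P"
    unfolding ip mm_diff_l mm_diff_r mm_scaleR_l mm_scaleR_r matrix_mul_assoc PG
    unfolding Gi_def H'_def F'_def by (simp add: matrix_transpose_mul matrix_mul_assoc)
  finally have E: "transpose P ** (?hF ** Gi ** transpose ?hH) ** P = transpose P ** (H ** Gi ** transpose F - (1/2 * ipm Gi F H) *\<^sub>R Gm) ** P" .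
  have canc: "X = transpose Q ** (transpose P ** X ** P) ** Q" for X :: "real^4^4"
    by (simp add: matrix_mul_assoc tPQ PQ cancel_r[OF tPQ] cancel_r[OF PQ])
  have "?hF ** Gi ** transpose ?hH = H ** Gi ** transpose F - (1/2 * ipm Gi F H) *\<^sub>R Gm"
    by (subst canc, subst (2) canc, simp only: E)
  then show ?thesis unfolding GiE s_def .
qed

lemma sumP: "sum g (UNIV::('a::finite + 'b::finite) set) = (\<Sum>x\<in>UNIV. g (Inl x)) + (\<Sum>x\<in>UNIV. g (Inr x))"
proof -
  have "sum g (UNIV::('a + 'b) set) = sum g (UNIV <+> UNIV)" by simp
  also have "... = sum (g \<circ> Inl) UNIV + sum (g \<circ> Inr) UNIV" by (rule sum.Plus) auto
  finally show ?thesis by simp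
qed

lemma omega_expand: "omega u (v::real^('n::finite+'n)) = (\<Sum>p\<in>UNIV. u$Inr p * v$Inl p - u$Inl p * v$Inr p)"
proof -
  have M: "(omega_mat *v v) $ Inl p = - v $ Inr p" "(omega_mat *v v) $ Inr p = v $ Inl p" for p :: 'n
    by (simp_all add: matrix_vector_mult_def omega_mat_def sumP if_distrib[of "\<lambda>x. x * _"] cong: if_cong)
  show ?thesis
    unfolding omega_def inner_vec_def by (simp add: sumP M sum.distrib[symmetric] sum_subtractf[symmetric] algebra_simps)
qed

lemma gamma_Inl: "(gamma_mat R I *v v) $ Inl p = ((- (matrix_inv I ** R)) *v (\<chi> q. v $ Inl q) + matrix_inv I *v (\<chi> q. v $ Inr q)) $ p"
  by (simp add: gamma_mat_def Let_def matrix_vector_mult_def sumP)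
lemma gamma_Inr: "(gamma_mat R I *v v) $ Inr p = ((- I - R ** matrix_inv I ** R) *v (\<chi> q. v $ Inl q) + (R ** matrix_inv I) *v (\<chi> q. v $ Inr q)) $ p"
  by (simp add: gamma_mat_def Let_def matrix_vector_mult_def sumP)

lemma mv_sum: "(A::real^'n^'m) *v (\<Sum>i\<in>S. f i) = (\<Sum>i\<in>S. A *v f i)"
  by (rule linear_sum[OF matrix_vector_mul_linear])

lemma omega_sum_scale: "omega u (\<Sum>d\<in>S. c d *\<^sub>R v d) = (\<Sum>d\<in>S. c d * omega u (v d))"
  unfolding omega_def mv_sum by (simp add: inner_sum_right matrix_vector_mult_scaleR)

lemma mv_neg_r: "(A::real^'n^'m) *v (- x) = - (A *v x)"
  by (simp add: matrix_vector_mult_def vec_eq_iff sum_negf)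
lemma mv_neg_l: "(- (A::real^'n^'m)) *v x = - (A *v x)"
  by (simp add: matrix_vector_mult_def vec_eq_iff sum_negf)

lemma sym_dot: "transpose A = A \<Longrightarrow> (A *v u) \<bullet> v = u \<bullet> ((A::real^'n^'n) *v v)"
  by (metis dot_lmul_matrix transpose_matrix_vector)

lemma inv_of_invertible: "invertible (A::real^'n^'n) \<Longrightarrow> A ** matrix_inv A = mat 1 \<and> matrix_inv A ** A = mat 1"
  unfolding invertible_def matrix_inv_def by (rule someI_ex)

lemma posdef_invertible: "pos_def_mat (A::real^'n^'n) \<Longrightarrow> invertible A"
  unfolding invertible_left_inverse matrix_left_invertible_ker pos_def_mat_def
  apply (intro allI impI)
  apply (rule ccontr)
  by (metis inner_zero_right less_irrefl)

lemma hodge2_comp: "hodge2 \<sigma> G W a b $ k = hodm (\<sigma> * sqrt \<bar>det G\<bar>) (matrix_inv G) (\<chi> c d. W c d $ k) $ a $ b"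
  unfolding hodge2_def hodm_def hodK_def
  apply (simp add: mmc transpose_def sum_component sum_distrib_left sum_distrib_right algebra_simps)
  apply (rule sum.cong[OF refl], rule sum.cong[OF refl], rule sum.swap)
  done

lemma move22: "(\<Sum>c\<in>A. \<Sum>d\<in>B. \<Sum>l\<in>C. \<Sum>s\<in>D. f c d l s) = (\<Sum>l\<in>C. \<Sum>s\<in>D. \<Sum>c\<in>A. \<Sum>d\<in>B. (f c d l s :: real))"
proof -
  have "(\<Sum>c\<in>A. \<Sum>d\<in>B. \<Sum>l\<in>C. \<Sum>s\<in>D. f c d l s) = (\<Sum>l\<in>C. \<Sum>c\<in>A. \<Sum>d\<in>B. \<Sum>s\<in>D. f c d l s)"
    by (rule swap3)
  also have "... = (\<Sum>l\<in>C. \<Sum>s\<in>D. \<Sum>c\<in>A. \<Sum>d\<in>B. f c d l s)"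
    by (rule sum.cong[OF refl], rule swap3)
  finally show ?thesis .
qed

lemma ent1: "((F::real^4^4) ** Gi ** transpose H) $ a $ b = (\<Sum>c\<in>UNIV. F$a$c * (\<Sum>d\<in>UNIV. Gi$c$d * H$b$d))"
  apply (simp add: mmc transpose_def sum_distrib_left sum_distrib_right algebra_simps)
  apply (rule sum.swap)
  done

lemma ent2: "ipm Gi F H = (\<Sum>c\<in>UNIV. \<Sum>d\<in>UNIV. F$c$d * (\<Sum>e\<in>UNIV. \<Sum>f\<in>UNIV. Gi$c$e * Gi$d$f * H$e$f))"
  unfolding ipm_def trace_def
  apply (simp add: mmc transpose_def sum_distrib_left sum_distrib_right algebra_simps)
  apply (rule trans[OF sum.swap])
  apply (rule sum.cong[OF refl], rule sum.cong[OF refl])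
  apply (rule trans[OF sum.swap])
  apply (rule sum.cong[OF refl], rule sum.cong[OF refl])
  apply (simp add: mult_ac)
  done

lemma gsum: "(\<Sum>c\<in>UNIV. \<Sum>d\<in>UNIV. Gi$c$d * (\<Sum>L\<in>UNIV. \<Sum>S\<in>UNIV. I$L$S * (X L $a$c * X S $b$d)))
  = (\<Sum>L\<in>UNIV. \<Sum>S\<in>UNIV. I$L$S * (X L ** Gi ** transpose (X S :: real^4^4))$a$b)"
  unfolding ent1
  apply (simp add: sum_distrib_left sum_distrib_right algebra_simps)
  apply (subst move22)
  apply (simp add: mult_ac)
  done

theorem lemma2p15:
  fixes U :: "(real^4) set" and \<sigma> :: real
    and V :: "(real^'s::finite) set"
    and J :: "real^'s \<Rightarrow> real^('n::finite + 'n)^('n + 'n)"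
    and R I :: "real^'s \<Rightarrow> real^'n^'n"
    and g :: "real^4 \<Rightarrow> real^4^4"
    and \<phi> :: "real^4 \<Rightarrow> real^'s"
    and VV :: "real^4 \<Rightarrow> 4 \<Rightarrow> 4 \<Rightarrow> real^('n + 'n)"
  assumes "open U" "contractible U" "compact (closure U)" "U \<noteq> {}"
    and "\<sigma> = 1 \<or> \<sigma> = -1"
    and "open V"
    and "taming_map V J"
    and "local_em_structure TYPE('s) V R I" and "\<forall>y\<in>V. J y = gamma_mat (R y) (I y)"
    and "lorentzian_metric U g"
    and "smooth_on U \<phi>" and "\<phi> ` U \<subseteq> V"
    and "two_form_on U VV"
    and "\<forall>x\<in>U. \<forall>a b. hodge2 \<sigma> (g x) (VV x) a b = - (J (\<phi> x) *v VV x a b)"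
  shows "\<forall>x\<in>U. \<forall>a b.
     2 * (\<Sum>L\<in>UNIV. \<Sum>S\<in>UNIV. I (\<phi> x) $ L $ S *
            (\<Sum>c\<in>UNIV. VV x a c $ Inl L * (\<Sum>d\<in>UNIV. matrix_inv (g x) $ c $ d * VV x b d $ Inl S)))
     - 1/2 * g x $ a $ b * (\<Sum>L\<in>UNIV. \<Sum>S\<in>UNIV. I (\<phi> x) $ L $ S *
            (\<Sum>c\<in>UNIV. \<Sum>d\<in>UNIV. VV x c d $ Inl L *
               (\<Sum>e\<in>UNIV. \<Sum>f\<in>UNIV. matrix_inv (g x) $ c $ e * matrix_inv (g x) $ d $ f * VV x e f $ Inl S)))
   = (\<Sum>c\<in>UNIV. omega (VV x a c)
        (J (\<phi> x) *v (\<Sum>d\<in>UNIV. matrix_inv (g x) $ c $ d *\<^sub>R VV x b d)))"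
proof (intro ballI allI)
  fix x a b assume xU: "x \<in> U"
  note asm = assms
  define Gm where "Gm = g x"
  define Gi where "Gi = matrix_inv Gm"
  define s where "s = \<sigma> * sqrt \<bar>det Gm\<bar>"
  define W where "W = VV x"
  define y where "y = \<phi> x"
  define R0 where "R0 = R y"
  define I0 where "I0 = I y"
  define Ii where "Ii = matrix_inv I0"
  define Y where "Y = J y"
  obtain P where Pinv: "invertible P" and PG: "transpose P ** Gm ** P = minkowski"
    using asm(10) xU unfolding lorentzian_metric_def Gm_def by blast
  have yV: "y \<in> V" using asm(12) xU unfolding y_def by blast
  have R0s: "transpose R0 = R0" and I0s: "transpose I0 = I0" and I0p: "pos_def_mat I0"
    using asm(8) yV unfolding local_em_structure_def sym_mat_def R0_def I0_def by auto
  have Ii1: "I0 ** Ii = mat 1" and Ii2: "Ii ** I0 = mat 1"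
    using inv_of_invertible[OF posdef_invertible[OF I0p]] unfolding Ii_def by auto
  have YE: "Y = gamma_mat R0 I0" using asm(9) yV unfolding Y_def R0_def I0_def by blast
  have Wanti: "W c d = - W d c" for c d using asm(13) xU unfolding two_form_on_def W_def by blast
  have hyp: "hodge2 \<sigma> Gm W c d = - (Y *v W c d)" for c d
    using asm(14) xU unfolding Gm_def W_def Y_def y_def by blast
  define FL where "FL L = (\<chi> c d. W c d $ Inl L)" for L
  define HL where "HL L = (\<chi> c d. W c d $ Inr L)" for L
  define fv where "fv c d = (\<chi> L. W c d $ Inl L)" for c d
  define hv where "hv c d = (\<chi> L. W c d $ Inr L)" for c d
  define sfv where "sfv c d = (\<chi> L. hodm s Gi (FL L) $ c $ d)" for c d
  define shv where "shv c d = (\<chi> L. hodm s Gi (HL L) $ c $ d)" for c d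
  have WK: "W d c $ k = - (W c d $ k)" for c d k using Wanti[of d c] by simp
  have aFL: "transpose (FL L) = - FL L" for L
    unfolding FL_def vec_eq_iff transpose_def
    by (intro allI) (simp only: vec_lambda_beta vector_uminus_component, rule WK)
  have comp: "(Y *v W c d) $ k = - hodm s Gi (\<chi> c d. W c d $ k) $ c $ d" for c d k
    using arg_cong[OF hyp[of c d], of "\<lambda>v. v $ k"] unfolding hodge2_comp s_def Gi_def by simp
  have sfE: "sfv c d = - ((- (Ii ** R0)) *v fv c d + Ii *v hv c d)" for c d
  proof -
    have "sfv c d $ L = - ((- (Ii ** R0)) *v fv c d + Ii *v hv c d) $ L" for L
      using comp[of c d "Inl L"] unfolding YE gamma_Inl sfv_def FL_def fv_def hv_def Ii_def by simp
    then show ?thesis by (simp add: vec_eq_iff)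
  qed
  have shE: "shv c d = - ((- I0 - R0 ** Ii ** R0) *v fv c d + (R0 ** Ii) *v hv c d)" for c d
  proof -
    have "shv c d $ L = - ((- I0 - R0 ** Ii ** R0) *v fv c d + (R0 ** Ii) *v hv c d) $ L" for L
      using comp[of c d "Inr L"] unfolding YE gamma_Inr shv_def HL_def fv_def hv_def Ii_def by simp
    then show ?thesis by (simp add: vec_eq_iff)
  qed
  have E0: "I0 *v sfv c d = R0 *v fv c d - hv c d" for c d
    unfolding sfE by (simp add: mv_neg_r mv_neg_l matrix_vector_right_distrib matrix_vector_mult_diff_distrib matrix_vector_mul_assoc matrix_mul_assoc Ii1)
  have E1: "hv c d = R0 *v fv c d - I0 *v sfv c d" for c d
    unfolding E0 by simp
  have E2: "shv c d = I0 *v fv c d + R0 *v sfv c d" for c d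
    unfolding shE sfE by (simp add: matrix_vector_mult_diff_distrib mv_neg_r mv_neg_l matrix_vector_right_distrib matrix_vector_mult_diff_rdistrib matrix_vector_mult_add_rdistrib matrix_vector_mul_assoc matrix_mul_assoc)
  have Ycomp1: "(Y *v W c d) $ Inl p = - (sfv c d $ p)" for c d p
    using comp[of c d "Inl p"] unfolding sfv_def FL_def by simp
  have Ycomp2: "(Y *v W c d) $ Inr p = - (shv c d $ p)" for c d p
    using comp[of c d "Inr p"] unfolding shv_def HL_def by simp
  have R2: "omega (W c e) (Y *v W d f) = fv c e \<bullet> shv d f - hv c e \<bullet> sfv d f" for c d e f
    unfolding omega_expand Ycomp1 Ycomp2 inner_vec_def fv_def hv_def
    by (simp add: sum_subtractf[symmetric] algebra_simps)
  have R3: "omega (W c e) (Y *v W d f) = fv c e \<bullet> (I0 *v fv d f) + sfv c e \<bullet> (I0 *v sfv d f)" for c d e f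
    unfolding R2 E1 E2
    by (simp add: inner_add_right inner_diff_left sym_dot[OF R0s] sym_dot[OF I0s])
  have Qexp: "u \<bullet> (I0 *v v) = (\<Sum>L\<in>UNIV. \<Sum>S\<in>UNIV. I0$L$S * (u$L * v$S))" for u v
    by (simp add: inner_vec_def matrix_vector_mult_def sum_distrib_left algebra_simps)
  have I0sym: "I0$S$L = I0$L$S" for L S
    using arg_cong[OF I0s, of "\<lambda>M. M $ L $ S"] by (simp add: transpose_def)
  define A where "A = (\<Sum>L\<in>UNIV. \<Sum>S\<in>UNIV. I0$L$S * (FL L ** Gi ** transpose (FL S))$a$b)"
  define B where "B = (\<Sum>L\<in>UNIV. \<Sum>S\<in>UNIV. I0$L$S * ipm Gi (FL L) (FL S))"
  have keyL: "hodm s Gi (FL L) ** Gi ** transpose (hodm s Gi (FL S)) = FL S ** Gi ** transpose (FL L) - (1/2 * ipm Gi (FL L) (FL S)) *\<^sub>R Gm" for L S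
    unfolding s_def Gi_def by (rule key[OF Pinv PG asm(5) aFL aFL])
  have A': "(\<Sum>L\<in>UNIV. \<Sum>S\<in>UNIV. I0$L$S * (FL S ** Gi ** transpose (FL L))$a$b) = A"
    unfolding A_def by (subst sum.swap) (simp add: I0sym)
  have Sec: "(\<Sum>c\<in>UNIV. \<Sum>d\<in>UNIV. Gi$c$d * (\<Sum>L\<in>UNIV. \<Sum>S\<in>UNIV. I0$L$S * (hodm s Gi (FL L) $a$c * hodm s Gi (FL S) $b$d)))
      = A - 1/2 * Gm$a$b * B"
  proof -
    have "(\<Sum>c\<in>UNIV. \<Sum>d\<in>UNIV. Gi$c$d * (\<Sum>L\<in>UNIV. \<Sum>S\<in>UNIV. I0$L$S * (hodm s Gi (FL L) $a$c * hodm s Gi (FL S) $b$d)))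
       = (\<Sum>L\<in>UNIV. \<Sum>S\<in>UNIV. I0$L$S * (hodm s Gi (FL L) ** Gi ** transpose (hodm s Gi (FL S)))$a$b)"
      by (rule gsum)
    also have "... = (\<Sum>L\<in>UNIV. \<Sum>S\<in>UNIV. I0$L$S * (FL S ** Gi ** transpose (FL L))$a$b)
        - 1/2 * Gm$a$b * B"
      unfolding keyL B_def by (simp add: algebra_simps sum_subtractf sum_distrib_left)
    finally show ?thesis unfolding A' .
  qed
  have Fir: "(\<Sum>c\<in>UNIV. \<Sum>d\<in>UNIV. Gi$c$d * (\<Sum>L\<in>UNIV. \<Sum>S\<in>UNIV. I0$L$S * (FL L $a$c * FL S $b$d))) = A"
    unfolding A_def by (rule gsum)
  have RHSe: "(\<Sum>c\<in>UNIV. omega (W a c) (Y *v (\<Sum>d\<in>UNIV. Gi $ c $ d *\<^sub>R W b d))) = 2 * A - 1/2 * Gm$a$b * B"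
  proof -
    have "(\<Sum>c\<in>UNIV. omega (W a c) (Y *v (\<Sum>d\<in>UNIV. Gi $ c $ d *\<^sub>R W b d)))
       = (\<Sum>c\<in>UNIV. \<Sum>d\<in>UNIV. Gi$c$d * omega (W a c) (Y *v W b d))"
      by (simp add: mv_sum matrix_vector_mult_scaleR omega_sum_scale)
    also have "... = (\<Sum>c\<in>UNIV. \<Sum>d\<in>UNIV. Gi$c$d * (\<Sum>L\<in>UNIV. \<Sum>S\<in>UNIV. I0$L$S * (FL L $a$c * FL S $b$d)))
        + (\<Sum>c\<in>UNIV. \<Sum>d\<in>UNIV. Gi$c$d * (\<Sum>L\<in>UNIV. \<Sum>S\<in>UNIV. I0$L$S * (hodm s Gi (FL L) $a$c * hodm s Gi (FL S) $b$d)))"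
      unfolding R3 Qexp sum.distrib[symmetric] distrib_left[symmetric]
      by (simp add: fv_def sfv_def FL_def)
    also have "... = 2 * A - 1/2 * Gm$a$b * B" unfolding Fir Sec by simp
    finally show ?thesis .
  qed
  have LHSe: "2 * (\<Sum>L\<in>UNIV. \<Sum>S\<in>UNIV. I0 $ L $ S *
            (\<Sum>c\<in>UNIV. W a c $ Inl L * (\<Sum>d\<in>UNIV. Gi $ c $ d * W b d $ Inl S)))
     - 1/2 * Gm $ a $ b * (\<Sum>L\<in>UNIV. \<Sum>S\<in>UNIV. I0 $ L $ S *
            (\<Sum>c\<in>UNIV. \<Sum>d\<in>UNIV. W c d $ Inl L *
               (\<Sum>e\<in>UNIV. \<Sum>f\<in>UNIV. Gi $ c $ e * Gi $ d $ f * W e f $ Inl S)))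
     = 2 * A - 1/2 * Gm$a$b * B"
    unfolding A_def B_def ent1 ent2 by (simp add: FL_def)
  show "2 * (\<Sum>L\<in>UNIV. \<Sum>S\<in>UNIV. I (\<phi> x) $ L $ S *
            (\<Sum>c\<in>UNIV. VV x a c $ Inl L * (\<Sum>d\<in>UNIV. matrix_inv (g x) $ c $ d * VV x b d $ Inl S)))
     - 1/2 * g x $ a $ b * (\<Sum>L\<in>UNIV. \<Sum>S\<in>UNIV. I (\<phi> x) $ L $ S *
            (\<Sum>c\<in>UNIV. \<Sum>d\<in>UNIV. VV x c d $ Inl L *
               (\<Sum>e\<in>UNIV. \<Sum>f\<in>UNIV. matrix_inv (g x) $ c $ e * matrix_inv (g x) $ d $ f * VV x e f $ Inl S)))
   = (\<Sum>c\<in>UNIV. omega (VV x a c)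
        (J (\<phi> x) *v (\<Sum>d\<in>UNIV. matrix_inv (g x) $ c $ d *\<^sub>R VV x b d)))"
    using LHSe RHSe unfolding W_def Y_def y_def Gi_def Gm_def I0_def by simp
qed

end
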